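(* Every point $(d_1,d_3)\in S_{13}$ satisfies $d_1\le 3d_3+3/8$.
   Context: For a finite graph $G$ and a $k$-vertex graph $H$, $d(H,G)$ is the probability that a uniformly random $k$-element subset of $V(G)$ induces a subgraph isomorphic to $H$. For $k\in\{0,1,2,3\}$ let $H_k$ be the 3-vertex graph with exactly $k$ edges. Let $S\subseteq\mathbb{R}^4$ be the set of all $(d_0,d_1,d_2,d_3)$ such that for every $\varepsilon>0$ and every $n\in\mathbb{N}$ there is a graph $G$ with at least $n$ vertices satisfying $|d(H_k,G)-d_k|\le\varepsilon$ for $k=0,1,2,3$. For $i<j$, $S_{ij}=\{(d_i,d_j):(d_0,d_1,d_2,d_3)\in S\}$. *)

theory Defs
  imports Complex_Main
begin

definition is_graph :: "nat \<Rightarrow> nat set set \<Rightarrow> bool" where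
  "is_graph N E \<longleftrightarrow> (\<forall>e\<in>E. e \<subseteq> {0..<N} \<and> card e = 2)"

definition induced_edges :: "nat set set \<Rightarrow> nat set \<Rightarrow> nat" where
  "induced_edges E T = card {e \<in> E. e \<subseteq> T}"

text \<open>d(H_k, G): probability that a uniformly random 3-subset of the vertices induces
  a graph isomorphic to H_k, the 3-vertex graph with exactly k edges (a 3-vertex graph
  is isomorphic to H_k iff it has exactly k edges).\<close>
definition dens3 :: "nat \<Rightarrow> nat \<Rightarrow> nat set set \<Rightarrow> real" where
  "dens3 k N E = real (card {T. T \<subseteq> {0..<N} \<and> card T = 3 \<and> induced_edges E T = k})
                 / real (N choose 3)"

definition S_set :: "(real \<times> real \<times> real \<times> real) set" where
  "S_set = {(d0, d1, d2, d3). \<forall>\<epsilon>>0. \<forall>n::nat. \<exists>N E. is_graph N E \<and> N \<ge> n \<and>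
      \<bar>dens3 0 N E - d0\<bar> \<le> \<epsilon> \<and> \<bar>dens3 1 N E - d1\<bar> \<le> \<epsilon> \<and>
      \<bar>dens3 2 N E - d2\<bar> \<le> \<epsilon> \<and> \<bar>dens3 3 N E - d3\<bar> \<le> \<epsilon>}"

definition S13 :: "(real \<times> real) set" where
  "S13 = {(d1, d3). \<exists>d0 d2. (d0, d1, d2, d3) \<in> S_set}"

end

theory Submission
  imports Defs
begin

lemma fiber_card:
  assumes "card T = 3" "T \<subseteq> V"
  shows "card {p \<in> V \<times> V \<times> V. (case p of (x,y,z) \<Rightarrow> x \<noteq> y \<and> y \<noteq> z \<and> x \<noteq> z \<and> {x,y,z} = T)} = 6"
proof -
  obtain a b c where T: "T = {a,b,c}" "a \<noteq> b" "b \<noteq> c" "a \<noteq> c" using assms(1) card_3_iff by metis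
  have abc: "a \<in> V" "b \<in> V" "c \<in> V" using assms(2) T by auto
  have "{p \<in> V \<times> V \<times> V. (case p of (x,y,z) \<Rightarrow> x \<noteq> y \<and> y \<noteq> z \<and> x \<noteq> z \<and> {x,y,z} = T)}
     = {(a,b,c),(a,c,b),(b,a,c),(b,c,a),(c,a,b),(c,b,a)}" (is "?L = ?R")
  proof
    show "?L \<subseteq> ?R"
    proof
      fix p assume "p \<in> ?L"
      then obtain x y z where p: "p = (x,y,z)" and h: "x \<noteq> y" "y \<noteq> z" "x \<noteq> z" "{x,y,z} = T"
        by auto
      have "x = a \<or> x = b \<or> x = c" "y = a \<or> y = b \<or> y = c" "z = a \<or> z = b \<or> z = c"
        using h(4) T(1) by blast+
      then show "p \<in> ?R" using h(1-3) p by (elim disjE) simp_all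
    qed
    show "?R \<subseteq> ?L" using T abc by (auto simp: insert_commute)
  qed
  then show ?thesis using T by simp
qed

definition ind3 :: "nat \<Rightarrow> nat \<Rightarrow> nat \<Rightarrow> real" where
  "ind3 x y z = of_bool (x \<noteq> y \<and> y \<noteq> z \<and> x \<noteq> z)"

lemma triple_sum:
  fixes V :: "nat set" and h :: "nat set \<Rightarrow> real"
  assumes fin: "finite V"
  shows "(\<Sum>x\<in>V. \<Sum>y\<in>V. \<Sum>z\<in>V. ind3 x y z * h {x,y,z}) = 6 * (\<Sum>T\<in>{T. T \<subseteq> V \<and> card T = 3}. h T)"
proof -
  define D where "D = {p \<in> V \<times> V \<times> V. (case p of (x,y,z) \<Rightarrow> x \<noteq> y \<and> y \<noteq> z \<and> x \<noteq> z)}"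
  define f :: "nat \<times> nat \<times> nat \<Rightarrow> nat set" where "f = (\<lambda>(x,y,z). {x,y,z})"
  define T3 where "T3 = {T. T \<subseteq> V \<and> card T = 3}"
  have finD: "finite D" unfolding D_def using fin by simp
  have finT3: "finite T3" unfolding T3_def using fin by (auto intro: finite_subset[of _ "Pow V"])
  have 1: "(\<Sum>x\<in>V. \<Sum>y\<in>V. \<Sum>z\<in>V. ind3 x y z * h {x,y,z})
     = (\<Sum>p\<in>V \<times> V \<times> V. (case p of (x,y,z) \<Rightarrow> ind3 x y z * h {x,y,z}))"
    by (simp add: sum.cartesian_product)
  also have "\<dots> = (\<Sum>p\<in>D. h (f p))"
    unfolding D_def f_def using fin
    by (subst sum.inter_filter) (auto intro!: sum.cong simp: ind3_def)
  also have "\<dots> = (\<Sum>T\<in>T3. \<Sum>p\<in>{p. p \<in> D \<and> f p = T}. h (f p))"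
  proof (rule sum.group[symmetric, OF finD finT3])
    show "f ` D \<subseteq> T3" unfolding D_def f_def T3_def by (auto simp: card_3_iff)
  qed
  also have "\<dots> = (\<Sum>T\<in>T3. 6 * h T)"
  proof (rule sum.cong[OF refl])
    fix T assume "T \<in> T3"
    then have T: "card T = 3" "T \<subseteq> V" unfolding T3_def by auto
    have "{p. p \<in> D \<and> f p = T} = {p \<in> V \<times> V \<times> V. (case p of (x,y,z) \<Rightarrow> x \<noteq> y \<and> y \<noteq> z \<and> x \<noteq> z \<and> {x,y,z} = T)}"
      unfolding D_def f_def by auto
    then have "card {p. p \<in> D \<and> f p = T} = 6" using fiber_card[OF T] by simp
    moreover have "(\<Sum>p\<in>{p. p \<in> D \<and> f p = T}. h (f p)) = (\<Sum>p\<in>{p. p \<in> D \<and> f p = T}. h T)"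
      by (rule sum.cong) auto
    ultimately show "(\<Sum>p\<in>{p. p \<in> D \<and> f p = T}. h (f p)) = 6 * h T" by simp
  qed
  finally show ?thesis unfolding T3_def by (simp add: sum_distrib_left)
qed

lemma ind3_sym: "ind3 x y z = ind3 y x z" "ind3 x y z = ind3 x z y"
  unfolding ind3_def by auto

lemma ind_sum:
  assumes "finite V" "x \<in> V" "y \<in> V"
  shows "(\<Sum>z\<in>V. ind3 x y z) = (if x \<noteq> y then real (card V) - 2 else 0)"
proof (cases "x = y")
  case True then show ?thesis by (simp add: ind3_def)
next
  case False
  have "V \<inter> {z. x \<noteq> y \<and> y \<noteq> z \<and> x \<noteq> z} = V - {x,y}" using False by auto
  moreover have "card (V - {x,y}) = card V - 2" using assms False by (simp add: card_Diff_subset)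
  moreover have "card V \<ge> 2" using assms False
    by (metis card_2_iff card_mono empty_subsetI insert_subset)
  ultimately show ?thesis using False assms(1) by (simp add: ind3_def of_nat_diff)
qed

lemma swap12: "(\<Sum>x\<in>V. \<Sum>y\<in>V. \<Sum>z\<in>V. F x y z) = (\<Sum>y\<in>V. \<Sum>x\<in>V. \<Sum>z\<in>V. F x y z)"
  by (rule sum.swap)
lemma swap23: "(\<Sum>x\<in>V. \<Sum>y\<in>V. \<Sum>z\<in>V. F x y z) = (\<Sum>x\<in>V. \<Sum>z\<in>V. \<Sum>y\<in>V. F x y z)"
  by (rule sum.cong[OF refl], rule sum.swap)

locale adjm =
  fixes V :: "nat set" and a :: "nat \<Rightarrow> nat \<Rightarrow> real"
  assumes finV: "finite V" and sym: "a x y = a y x" and irr: "a x x = 0"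
    and bin: "a x y = 0 \<or> a x y = 1"
begin

definition dg where "dg x = (\<Sum>y\<in>V. a x y)"

lemma sq: "a x y * a x y = a x y" using bin[of x y] by auto

lemma T1: "(\<Sum>x\<in>V. \<Sum>y\<in>V. \<Sum>z\<in>V. ind3 x y z * a x y) = (real (card V) - 2) * (\<Sum>x\<in>V. dg x)"
proof -
  have "(\<Sum>x\<in>V. \<Sum>y\<in>V. \<Sum>z\<in>V. ind3 x y z * a x y) = (\<Sum>x\<in>V. \<Sum>y\<in>V. a x y * (\<Sum>z\<in>V. ind3 x y z))"
    by (simp add: sum_distrib_left mult.commute)
  also have "\<dots> = (\<Sum>x\<in>V. \<Sum>y\<in>V. a x y * (real (card V) - 2))"
    using finV by (intro sum.cong refl) (auto simp: ind_sum irr)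
  finally show ?thesis by (simp add: dg_def sum_distrib_left sum_distrib_right mult.commute)
qed

lemma T2: "(\<Sum>x\<in>V. \<Sum>y\<in>V. \<Sum>z\<in>V. ind3 x y z * a y z) = (real (card V) - 2) * (\<Sum>x\<in>V. dg x)"
proof -
  have s1: "(\<Sum>x\<in>V. \<Sum>y\<in>V. \<Sum>z\<in>V. ind3 x y z * a y z) = (\<Sum>y\<in>V. \<Sum>x\<in>V. \<Sum>z\<in>V. ind3 x y z * a y z)"
    by (rule swap12)
  have s2: "(\<Sum>y\<in>V. \<Sum>x\<in>V. \<Sum>z\<in>V. ind3 x y z * a y z) = (\<Sum>y\<in>V. \<Sum>z\<in>V. \<Sum>x\<in>V. ind3 y z x * a y z)"
    by (subst swap23) (intro sum.cong refl, metis ind3_sym)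
  show ?thesis using s1 s2 T1 by simp
qed

lemma T3: "(\<Sum>x\<in>V. \<Sum>y\<in>V. \<Sum>z\<in>V. ind3 x y z * a x z) = (real (card V) - 2) * (\<Sum>x\<in>V. dg x)"
proof -
  have s1: "(\<Sum>x\<in>V. \<Sum>y\<in>V. \<Sum>z\<in>V. ind3 x y z * a x z) = (\<Sum>x\<in>V. \<Sum>z\<in>V. \<Sum>y\<in>V. ind3 x z y * a x z)"
    by (subst swap23) (intro sum.cong refl, metis ind3_sym)
  show ?thesis using s1 T1 by simp
qed

lemma C: assumes "y \<in> V"
  shows "(\<Sum>x\<in>V. \<Sum>z\<in>V. ind3 x y z * (a y x * a y z)) = dg y ^ 2 - dg y"
proof -
  have pw: "ind3 x y z * (a y x * a y z) = a y x * a y z - (if x = z then a y x * a y z else 0)" for x z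
    by (cases "x = y"; cases "z = y"; cases "x = z") (auto simp: ind3_def irr sym[of y y])
  have "(\<Sum>x\<in>V. \<Sum>z\<in>V. ind3 x y z * (a y x * a y z))
      = (\<Sum>x\<in>V. \<Sum>z\<in>V. a y x * a y z) - (\<Sum>x\<in>V. \<Sum>z\<in>V. (if x = z then a y x * a y z else 0))"
    by (simp only: pw sum_subtractf)
  also have "(\<Sum>x\<in>V. \<Sum>z\<in>V. a y x * a y z) = dg y ^ 2"
    by (simp add: dg_def power2_eq_square sum_product)
  also have "(\<Sum>x\<in>V. \<Sum>z\<in>V. (if x = z then a y x * a y z else 0)) = dg y"
    using finV by (simp add: dg_def sq)
  finally show ?thesis .
qed

lemma total:
  "(\<Sum>x\<in>V. \<Sum>y\<in>V. \<Sum>z\<in>V. ind3 x y z * (a x y + a y z + a x z - 2 * (a x y * a y z + a y z * a x z + a x y * a x z)))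
   = 3 * real (card V) * (\<Sum>x\<in>V. dg x) - 6 * (\<Sum>x\<in>V. dg x ^ 2)"
proof -
  have c1: "(\<Sum>x\<in>V. \<Sum>y\<in>V. \<Sum>z\<in>V. ind3 x y z * (a x y * a y z)) = (\<Sum>y\<in>V. dg y ^ 2 - dg y)"
  proof -
    have "(\<Sum>x\<in>V. \<Sum>y\<in>V. \<Sum>z\<in>V. ind3 x y z * (a x y * a y z)) = (\<Sum>y\<in>V. \<Sum>x\<in>V. \<Sum>z\<in>V. ind3 x y z * (a y x * a y z))"
      by (subst swap12) (simp add: sym)
    then show ?thesis using C by simp
  qed
  have c2: "(\<Sum>x\<in>V. \<Sum>y\<in>V. \<Sum>z\<in>V. ind3 x y z * (a y z * a x z)) = (\<Sum>y\<in>V. dg y ^ 2 - dg y)"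
  proof -
    have "(\<Sum>x\<in>V. \<Sum>y\<in>V. \<Sum>z\<in>V. ind3 x y z * (a y z * a x z)) = (\<Sum>x\<in>V. \<Sum>z\<in>V. \<Sum>y\<in>V. ind3 x y z * (a y z * a x z))"
      by (rule swap23)
    also have "\<dots> = (\<Sum>z\<in>V. \<Sum>x\<in>V. \<Sum>y\<in>V. ind3 x z y * (a z x * a z y))"
      by (subst swap12) (simp add: sym ind3_sym(2)[symmetric] mult.commute)
    finally show ?thesis using C by simp
  qed
  have c3: "(\<Sum>x\<in>V. \<Sum>y\<in>V. \<Sum>z\<in>V. ind3 x y z * (a x y * a x z)) = (\<Sum>y\<in>V. dg y ^ 2 - dg y)"
  proof -
    have "(\<Sum>x\<in>V. \<Sum>y\<in>V. \<Sum>z\<in>V. ind3 x y z * (a x y * a x z)) = (\<Sum>x\<in>V. \<Sum>y\<in>V. \<Sum>z\<in>V. ind3 y x z * (a x y * a x z))"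
      by (simp add: ind3_sym(1)[symmetric])
    then show ?thesis using C by simp
  qed
  have "(\<Sum>x\<in>V. \<Sum>y\<in>V. \<Sum>z\<in>V. ind3 x y z * (a x y + a y z + a x z - 2 * (a x y * a y z + a y z * a x z + a x y * a x z)))
     = (\<Sum>x\<in>V. \<Sum>y\<in>V. \<Sum>z\<in>V. ind3 x y z * a x y) + (\<Sum>x\<in>V. \<Sum>y\<in>V. \<Sum>z\<in>V. ind3 x y z * a y z)
      + (\<Sum>x\<in>V. \<Sum>y\<in>V. \<Sum>z\<in>V. ind3 x y z * a x z)
      - 2 * ((\<Sum>x\<in>V. \<Sum>y\<in>V. \<Sum>z\<in>V. ind3 x y z * (a x y * a y z)) + (\<Sum>x\<in>V. \<Sum>y\<in>V. \<Sum>z\<in>V. ind3 x y z * (a y z * a x z))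
      + (\<Sum>x\<in>V. \<Sum>y\<in>V. \<Sum>z\<in>V. ind3 x y z * (a x y * a x z)))"
    by (simp add: sum.distrib sum_subtractf sum_distrib_left algebra_simps)
  also have "\<dots> = 3 * real (card V) * (\<Sum>x\<in>V. dg x) - 6 * (\<Sum>x\<in>V. dg x ^ 2)"
    unfolding T1 T2 T3 c1 c2 c3 by (simp add: sum_subtractf algebra_simps)
  finally show ?thesis .
qed

lemma bound: "3 * real (card V) * (\<Sum>x\<in>V. dg x) - 6 * (\<Sum>x\<in>V. dg x ^ 2) \<le> 6 * real (card V) ^ 3 / 16"
proof -
  have "0 \<le> (\<Sum>x\<in>V. (dg x - real (card V) / 4) ^ 2)" by (simp add: sum_nonneg)
  also have "\<dots> = (\<Sum>x\<in>V. dg x ^ 2) - real (card V) / 2 * (\<Sum>x\<in>V. dg x) + real (card V) ^ 3 / 16"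
    by (simp add: power2_diff sum.distrib sum_subtractf sum_distrib_left algebra_simps power2_eq_square power3_eq_cube)
  finally show ?thesis by simp
qed

end


lemma choose2: "real (N choose 2) * 2 = real N * (real N - 1)"
  by (induction N) (auto simp: algebra_simps numeral_2_eq_2)

lemma choose3: "real (N choose 3) * 6 = real N * (real N - 1) * (real N - 2)"
proof (induction N)
  case 0 then show ?case by simp
next
  case (Suc N)
  have "(Suc N) choose 3 = (N choose 2) + (N choose 3)"
    by (simp add: numeral_3_eq_3 numeral_2_eq_2)
  then have "real ((Suc N) choose 3) * 6 = real (N choose 2) * 2 * 3 + real (N choose 3) * 6" by simp
  then show ?case using Suc choose2[of N] by (simp add: algebra_simps)
qed

definition adj :: "nat set set \<Rightarrow> nat \<Rightarrow> nat \<Rightarrow> real" where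
  "adj E x y = of_bool ({x,y} \<in> E)"

lemma ie3:
  assumes g: "is_graph N E" and d: "x \<noteq> y" "y \<noteq> z" "x \<noteq> z"
  shows "induced_edges E {x,y,z} = of_bool ({x,y} \<in> E) + of_bool ({y,z} \<in> E) + of_bool ({x,z} \<in> E)"
proof -
  have "{e \<in> E. e \<subseteq> {x,y,z}} = {{x,y},{y,z},{x,z}} \<inter> E"
  proof
    show "{e \<in> E. e \<subseteq> {x,y,z}} \<subseteq> {{x,y},{y,z},{x,z}} \<inter> E"
    proof
      fix e assume e: "e \<in> {e \<in> E. e \<subseteq> {x,y,z}}"
      then have "card e = 2" using g unfolding is_graph_def by auto
      then obtain u v where uv: "e = {u,v}" "u \<noteq> v" by (auto simp: card_2_iff)
      have "u \<in> {x,y,z}" "v \<in> {x,y,z}" using e uv by auto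
      then show "e \<in> {{x,y},{y,z},{x,z}} \<inter> E" using e uv by (auto simp: insert_commute)
    qed
  qed auto
  moreover have "card ({{x,y},{y,z},{x,z}} \<inter> E) = of_bool ({x,y} \<in> E) + of_bool ({y,z} \<in> E) + of_bool ({x,z} \<in> E)"
  proof -
    have "card ({{x,y},{y,z},{x,z}} \<inter> E) = (\<Sum>e\<in>{{x,y},{y,z},{x,z}}. of_bool (e \<in> E))"
      by (simp add: Int_def conj_commute)
    also have "\<dots> = of_bool ({x,y} \<in> E) + of_bool ({y,z} \<in> E) + of_bool ({x,z} \<in> E)"
      using d by (simp add: doubleton_eq_iff)
    finally show ?thesis .
  qed
  ultimately show ?thesis unfolding induced_edges_def by simp
qed

definition gg :: "nat \<Rightarrow> real" where "gg k = of_bool (k = 1) - 3 * of_bool (k = 3)"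

lemma gg_ie:
  assumes g: "is_graph N E" and d: "x \<noteq> y" "y \<noteq> z" "x \<noteq> z"
  shows "gg (induced_edges E {x,y,z}) = adj E x y + adj E y z + adj E x z
     - 2 * (adj E x y * adj E y z + adj E y z * adj E x z + adj E x y * adj E x z)"
  unfolding ie3[OF assms] gg_def adj_def by (cases "{x,y} \<in> E"; cases "{y,z} \<in> E"; cases "{x,z} \<in> E") auto

lemma adj_locale: assumes "is_graph N E" shows "adjm {0..<N} (adj E)"
proof
  fix x y show "adj E x y = adj E y x" by (simp add: adj_def insert_commute)
  show "adj E x x = 0" using assms unfolding adj_def is_graph_def by auto
  show "adj E x y = 0 \<or> adj E x y = 1" by (simp add: adj_def)
qed simp

lemma main_ineq:
  assumes g: "is_graph N E"
  shows "6 * (real (card {T. T \<subseteq> {0..<N} \<and> card T = 3 \<and> induced_edges E T = 1})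
     - 3 * real (card {T. T \<subseteq> {0..<N} \<and> card T = 3 \<and> induced_edges E T = 3})) \<le> 6 * real N ^ 3 / 16"
proof -
  interpret adjm "{0..<N}" "adj E" by (rule adj_locale[OF g])
  define T3 where "T3 = {T. T \<subseteq> {0..<N} \<and> card T = 3}"
  have finT3: "finite T3" unfolding T3_def by (auto intro: finite_subset[of _ "Pow {0..<N}"])
  have cnt: "real (card {T. T \<subseteq> {0..<N} \<and> card T = 3 \<and> induced_edges E T = k}) = (\<Sum>T\<in>T3. of_bool (induced_edges E T = k))" for k
  proof -
    have "{T. T \<subseteq> {0..<N} \<and> card T = 3 \<and> induced_edges E T = k} = T3 \<inter> {T. induced_edges E T = k}"
      unfolding T3_def by auto
    then show ?thesis using finT3 by simp
  qed
  have "real (card {T. T \<subseteq> {0..<N} \<and> card T = 3 \<and> induced_edges E T = 1})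
     - 3 * real (card {T. T \<subseteq> {0..<N} \<and> card T = 3 \<and> induced_edges E T = 3}) = (\<Sum>T\<in>T3. gg (induced_edges E T))"
    unfolding cnt gg_def by (simp add: sum_subtractf sum_distrib_left)
  then have "6 * (real (card {T. T \<subseteq> {0..<N} \<and> card T = 3 \<and> induced_edges E T = 1})
     - 3 * real (card {T. T \<subseteq> {0..<N} \<and> card T = 3 \<and> induced_edges E T = 3}))
     = (\<Sum>x\<in>{0..<N}. \<Sum>y\<in>{0..<N}. \<Sum>z\<in>{0..<N}. ind3 x y z * gg (induced_edges E {x,y,z}))"
    using triple_sum[of "{0..<N}" "\<lambda>T. gg (induced_edges E T)"] unfolding T3_def by simp
  also have "\<dots> = (\<Sum>x\<in>{0..<N}. \<Sum>y\<in>{0..<N}. \<Sum>z\<in>{0..<N}. ind3 x y z * (adj E x y + adj E y z + adj E x z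
     - 2 * (adj E x y * adj E y z + adj E y z * adj E x z + adj E x y * adj E x z)))"
  proof (intro sum.cong refl)
    fix x y z
    show "ind3 x y z * gg (induced_edges E {x,y,z}) = ind3 x y z * (adj E x y + adj E y z + adj E x z
     - 2 * (adj E x y * adj E y z + adj E y z * adj E x z + adj E x y * adj E x z))"
    proof (cases "x \<noteq> y \<and> y \<noteq> z \<and> x \<noteq> z")
      case True then show ?thesis using gg_ie[OF g] by simp
    qed (auto simp: ind3_def)
  qed
  also have "\<dots> = 3 * real (card {0..<N}) * (\<Sum>x\<in>{0..<N}. dg x) - 6 * (\<Sum>x\<in>{0..<N}. dg x ^ 2)"
    by (rule total)
  also have "\<dots> \<le> 6 * real (card {0..<N}) ^ 3 / 16" by (rule bound)
  finally show ?thesis by simp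
qed


lemma dens_bound:
  assumes g: "is_graph N E" and N3: "N \<ge> 3"
  shows "dens3 1 N E - 3 * dens3 3 N E \<le> 3 / 8 + 2 / (real N - 2)"
proof -
  define t1 where "t1 = real (card {T. T \<subseteq> {0..<N} \<and> card T = 3 \<and> induced_edges E T = 1})"
  define t3 where "t3 = real (card {T. T \<subseteq> {0..<N} \<and> card T = 3 \<and> induced_edges E T = 3})"
  define C where "C = real (N choose 3)"
  define n where "n = real N"
  have n3: "n \<ge> 3" using N3 unfolding n_def by simp
  have C6: "C * 6 = n * (n - 1) * (n - 2)" unfolding C_def n_def by (rule choose3)
  have Cpos: "C > 0" using C6 n3 by (smt (verit) mult_pos_pos)
  have t: "t1 - 3 * t3 \<le> n ^ 3 / 16" using main_ineq[OF g] unfolding t1_def t3_def n_def by simp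
  have poly: "n ^ 3 / 16 \<le> (3 / 8 + 2 / (n - 2)) * C"
  proof -
    have Ceq: "C = n * (n - 1) * (n - 2) / 6" using C6 by simp
    have nz: "n - 2 \<noteq> 0" using n3 by simp
    have "2 / (n - 2) * C = n * (n - 1) / 3" unfolding Ceq using nz by (simp add: field_simps)
    have "(3 / 8 + 2 / (n - 2)) * C = 3 / 8 * C + 2 / (n - 2) * C" by (simp add: distrib_right)
    also have "\<dots> = n * (n - 1) * (n - 2) / 16 + n * (n - 1) / 3"
      using \<open>2 / (n - 2) * C = n * (n - 1) / 3\<close> by (simp add: Ceq)
    finally have "(3 / 8 + 2 / (n - 2)) * C = n * (n - 1) * (n - 2) / 16 + n * (n - 1) / 3" .
    moreover have "n ^ 3 / 16 \<le> n * (n - 1) * (n - 2) / 16 + n * (n - 1) / 3"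
    proof -
      have "0 \<le> n * (7 * n - 10)" using n3 by simp
      moreover have "n * (n - 1) * (n - 2) / 16 + n * (n - 1) / 3 - n ^ 3 / 16 = n * (7 * n - 10) / 48"
        by (simp add: field_simps power3_eq_cube)
      ultimately show ?thesis by linarith
    qed
    ultimately show ?thesis by simp
  qed
  have "dens3 1 N E - 3 * dens3 3 N E = (t1 - 3 * t3) / C"
    unfolding dens3_def t1_def t3_def C_def by (simp add: diff_divide_distrib)
  also have "\<dots> \<le> 3 / 8 + 2 / (n - 2)"
    using t poly Cpos by (simp add: divide_le_eq)
  finally show ?thesis unfolding n_def .
qed

theorem lemma6:
  fixes d1 d3 :: real
  assumes "(d1, d3) \<in> S13"
  shows "d1 \<le> 3 * d3 + 3 / 8"
proof (rule ccontr)
  assume neg: "\<not> d1 \<le> 3 * d3 + 3 / 8"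
  define \<delta> where "\<delta> = d1 - 3 * d3 - 3 / 8"
  have dpos: "\<delta> > 0" using neg unfolding \<delta>_def by simp
  obtain d0 d2 where "(d0, d1, d2, d3) \<in> S_set" using assms unfolding S13_def by auto
  then have S: "\<forall>\<epsilon>>0. \<forall>n::nat. \<exists>N E. is_graph N E \<and> N \<ge> n \<and>
      \<bar>dens3 0 N E - d0\<bar> \<le> \<epsilon> \<and> \<bar>dens3 1 N E - d1\<bar> \<le> \<epsilon> \<and>
      \<bar>dens3 2 N E - d2\<bar> \<le> \<epsilon> \<and> \<bar>dens3 3 N E - d3\<bar> \<le> \<epsilon>" unfolding S_set_def by simp
  have "\<delta> / 8 > 0" using dpos by simp
  then have "\<exists>N E. is_graph N E \<and> N \<ge> nat \<lceil>16 / \<delta>\<rceil> + 3 \<and>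
      \<bar>dens3 0 N E - d0\<bar> \<le> \<delta> / 8 \<and> \<bar>dens3 1 N E - d1\<bar> \<le> \<delta> / 8 \<and>
      \<bar>dens3 2 N E - d2\<bar> \<le> \<delta> / 8 \<and> \<bar>dens3 3 N E - d3\<bar> \<le> \<delta> / 8"
    using S by blast
  then obtain N E where g: "is_graph N E" and Nn: "N \<ge> nat \<lceil>16 / \<delta>\<rceil> + 3"
    and e1: "\<bar>dens3 1 N E - d1\<bar> \<le> \<delta> / 8" and e3: "\<bar>dens3 3 N E - d3\<bar> \<le> \<delta> / 8"
    by blast
  have N3: "N \<ge> 3" using Nn by simp
  have "real N - 2 > 16 / \<delta>"
  proof -
    have "real (nat \<lceil>16 / \<delta>\<rceil>) \<ge> 16 / \<delta>" by linarith
    moreover have "real N \<ge> real (nat \<lceil>16 / \<delta>\<rceil>) + 3" using Nn by linarith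
    ultimately show ?thesis by linarith
  qed
  then have "2 / (real N - 2) < \<delta> / 8"
  proof -
    have pos: "real N - 2 > 0" using N3 by simp
    have "16 < \<delta> * (real N - 2)" using \<open>real N - 2 > 16 / \<delta>\<close> dpos by (simp add: divide_less_eq mult.commute)
    then show ?thesis using pos by (simp add: divide_less_eq)
  qed
  then have "dens3 1 N E - 3 * dens3 3 N E < 3 / 8 + \<delta> / 8" using dens_bound[OF g N3] by linarith
  moreover have "dens3 1 N E - 3 * dens3 3 N E \<ge> 3 / 8 + \<delta> / 2"
  proof -
    have a: "dens3 1 N E \<ge> d1 - \<delta> / 8" using e1 by linarith
    have b: "dens3 3 N E \<le> d3 + \<delta> / 8" using e3 by linarith
    show ?thesis using a b \<delta>_def by linarith
  qed
  ultimately show False using dpos by linarith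
qed

end
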